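(* For every graph $G$ and every positive integer $\alpha$, $\mathrm{tw}(G)\le 5\,\mathrm{ecrw}(G)-1$ and $\mathrm{tw}(G)\le 3\,\mathrm{ecrw}_\alpha(G)+2\alpha-1$.
   Context: A tree-cut decomposition of a graph $G$ is a pair $\mathcal{T}=(T,\{X_t\}_{t\in V(T)})$ where $T$ is a tree and the bags $X_t\subseteq V(G)$ are pairwise disjoint (possibly empty) with $\bigcup_{t\in V(T)}X_t=V(G)$. For a node $t$ of $T$, let $T_1,\dots,T_m$ be the connected components of $T-t$ and $Z_i=\bigcup_{s\in V(T_i)}X_s$; $\mathrm{cross}_{\mathcal{T}}(t)$ is the number of edges of $G$ whose two endpoints lie in two distinct sets among $Z_1,\dots,Z_m$ (if $T$ has one node, $\mathrm{cross}_{\mathcal T}(t)=0$). The crossing number of $\mathcal{T}$ is $\max_{t}\mathrm{cross}_{\mathcal{T}}(t)$, and the thickness of $\mathcal{T}$ is $\max_t|X_t|$. $\mathrm{ecrw}_\alpha(G)$ is the minimum crossing number over tree-cut decompositions of $G$ of thickness at most $\alpha$. The edge-crossing width of $\mathcal T$ is the maximum of its crossing number and its thickness, and $\mathrm{ecrw}(G)$ is the minimum edge-crossing width over all tree-cut decompositions of $G$. $\mathrm{tw}(G)$ denotes tree-width. *)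

theory Defs
  imports Main
begin

definition graph :: "'a set \<Rightarrow> 'a set set \<Rightarrow> bool" where
  "graph V E \<longleftrightarrow> finite V \<and> (\<forall>e\<in>E. \<exists>u v. e = {u, v} \<and> u \<noteq> v \<and> u \<in> V \<and> v \<in> V)"

definition adj_in :: "'b set set \<Rightarrow> 'b set \<Rightarrow> 'b \<Rightarrow> 'b \<Rightarrow> bool" where
  "adj_in F S x y \<longleftrightarrow> {x, y} \<in> F \<and> x \<in> S \<and> y \<in> S"

definition connected_in :: "'b set set \<Rightarrow> 'b set \<Rightarrow> bool" where
  "connected_in F S \<longleftrightarrow> (\<forall>x\<in>S. \<forall>y\<in>S. (adj_in F S)\<^sup>*\<^sup>* x y)"

definition is_tree :: "'b set \<Rightarrow> 'b set set \<Rightarrow> bool" where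
  "is_tree N F \<longleftrightarrow> graph N F \<and> N \<noteq> {} \<and> connected_in F N \<and> card F = card N - 1"

definition tree_decomp :: "'a set \<Rightarrow> 'a set set \<Rightarrow> nat set \<Rightarrow> nat set set \<Rightarrow> (nat \<Rightarrow> 'a set) \<Rightarrow> bool" where
  "tree_decomp V E N F B \<longleftrightarrow> is_tree N F
     \<and> (\<forall>t\<in>N. B t \<subseteq> V)
     \<and> (\<forall>v\<in>V. \<exists>t\<in>N. v \<in> B t)
     \<and> (\<forall>e\<in>E. \<exists>t\<in>N. e \<subseteq> B t)
     \<and> (\<forall>v\<in>V. connected_in F {t\<in>N. v \<in> B t})"

definition td_width :: "nat set \<Rightarrow> (nat \<Rightarrow> 'a set) \<Rightarrow> int" where
  "td_width N B = int (Max ((\<lambda>t. card (B t)) ` N)) - 1"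

definition treewidth :: "'a set \<Rightarrow> 'a set set \<Rightarrow> int" where
  "treewidth V E = Inf {td_width N B | N F B. tree_decomp V E N F B}"

definition tree_cut_decomp :: "'a set \<Rightarrow> 'a set set \<Rightarrow> nat set \<Rightarrow> nat set set \<Rightarrow> (nat \<Rightarrow> 'a set) \<Rightarrow> bool" where
  "tree_cut_decomp V E N F X \<longleftrightarrow> is_tree N F
     \<and> (\<forall>s\<in>N. \<forall>t\<in>N. s \<noteq> t \<longrightarrow> X s \<inter> X t = {})
     \<and> (\<Union>t\<in>N. X t) = V"

definition same_comp :: "nat set \<Rightarrow> nat set set \<Rightarrow> nat \<Rightarrow> nat \<Rightarrow> nat \<Rightarrow> bool" where
  "same_comp N F t s s' \<longleftrightarrow> (adj_in F (N - {t}))\<^sup>*\<^sup>* s s'"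

definition cross :: "'a set set \<Rightarrow> nat set \<Rightarrow> nat set set \<Rightarrow> (nat \<Rightarrow> 'a set) \<Rightarrow> nat \<Rightarrow> nat" where
  "cross E N F X t = card {e\<in>E. \<exists>u v s s'. e = {u, v} \<and> s \<in> N - {t} \<and> s' \<in> N - {t}
      \<and> u \<in> X s \<and> v \<in> X s' \<and> \<not> same_comp N F t s s'}"

definition crossing_number :: "'a set set \<Rightarrow> nat set \<Rightarrow> nat set set \<Rightarrow> (nat \<Rightarrow> 'a set) \<Rightarrow> nat" where
  "crossing_number E N F X = Max (cross E N F X ` N)"

definition thickness :: "nat set \<Rightarrow> (nat \<Rightarrow> 'a set) \<Rightarrow> nat" where
  "thickness N X = Max ((\<lambda>t. card (X t)) ` N)"

definition ecrw_alpha :: "nat \<Rightarrow> 'a set \<Rightarrow> 'a set set \<Rightarrow> nat" where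
  "ecrw_alpha \<alpha> V E = Inf {crossing_number E N F X | N F X.
       tree_cut_decomp V E N F X \<and> thickness N X \<le> \<alpha>}"

definition ecrw :: "'a set \<Rightarrow> 'a set set \<Rightarrow> nat" where
  "ecrw V E = Inf {max (crossing_number E N F X) (thickness N X) | N F X.
       tree_cut_decomp V E N F X}"

end

theory Submission
  imports Defs
begin

lemma graph_finE: "graph V E \<Longrightarrow> finite E"
proof -
  assume g: "graph V E"
  hence "E \<subseteq> Pow V" unfolding graph_def by fastforce
  moreover have "finite V" using g unfolding graph_def by blast
  ultimately show ?thesis using finite_subset by blast
qed

lemma conn_step:
  fixes \<mu> :: "nat \<Rightarrow> nat"
  assumes aS: "a \<in> S" and st: "\<And>t. t \<in> S \<Longrightarrow> t \<noteq> a \<Longrightarrow> \<exists>t'\<in>S. {t,t'} \<in> F \<and> \<mu> t' < \<mu> t"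
  shows "connected_in F S"
proof -
  have main: "\<And>t. t \<in> S \<Longrightarrow> (adj_in F S)\<^sup>*\<^sup>* t a \<and> (adj_in F S)\<^sup>*\<^sup>* a t"
  proof -
    fix t
    show "t \<in> S \<Longrightarrow> (adj_in F S)\<^sup>*\<^sup>* t a \<and> (adj_in F S)\<^sup>*\<^sup>* a t"
    proof (induction "\<mu> t" arbitrary: t rule: less_induct)
      case less
      show ?case
      proof (cases "t = a")
        case True then show ?thesis by simp
      next
        case False
        then obtain t' where t': "t' \<in> S" "{t,t'} \<in> F" "\<mu> t' < \<mu> t" using st less(2) by blast
        have ih: "(adj_in F S)\<^sup>*\<^sup>* t' a \<and> (adj_in F S)\<^sup>*\<^sup>* a t'" using less(1) t' by blast
        have e1: "adj_in F S t t'" using t' less(2) unfolding adj_in_def by simp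
        have e2: "adj_in F S t' t" using t' less(2) unfolding adj_in_def by (simp add: insert_commute)
        show ?thesis using ih e1 e2
          by (meson converse_rtranclp_into_rtranclp rtranclp.rtrancl_into_rtrancl)
      qed
    qed
  qed
  show ?thesis unfolding connected_in_def using main by (meson rtranclp_trans)
qed

locale rtree =
  fixes N :: "nat set" and F :: "nat set set" and r :: nat
  assumes tree: "is_tree N F" and root: "r \<in> N"
begin

definition d :: "nat \<Rightarrow> nat" where "d x = (LEAST n. (adj_in F N ^^ n) r x)"
definition p :: "nat \<Rightarrow> nat" where
  "p x = (if x = r then r else (SOME y. adj_in F N y x \<and> Suc (d y) = d x))"
definition anc where "anc t x \<longleftrightarrow> (\<exists>k. (p^^k) x = t)"
definition ch where "ch t x = (p ^^ (d x - d t - 1)) x"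
definition cp where "cp t x = (if anc t x \<and> x \<noteq> t then Some (ch t x) else None)"

lemma finN: "finite N" using tree unfolding is_tree_def graph_def by blast
lemma finF: "finite F" using tree graph_finE unfolding is_tree_def by blast

lemma d1: "x \<in> N \<Longrightarrow> (adj_in F N ^^ d x) r x"
proof -
  assume "x \<in> N"
  hence "(adj_in F N)\<^sup>*\<^sup>* r x" using tree root unfolding is_tree_def connected_in_def by blast
  then obtain n where "(adj_in F N ^^ n) r x" using rtranclp_imp_relpowp by metis
  thus ?thesis unfolding d_def using LeastI[of "\<lambda>n. (adj_in F N ^^ n) r x" n] by simp
qed

lemma adj_sym: "adj_in F N x y \<Longrightarrow> adj_in F N y x"
  unfolding adj_in_def by (simp add: insert_commute)

lemma adjN: "adj_in F N x y \<Longrightarrow> x \<in> N \<and> y \<in> N"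
  unfolding adj_in_def by simp

lemma d2: "adj_in F N x y \<Longrightarrow> d y \<le> Suc (d x)"
proof -
  assume a: "adj_in F N x y"
  hence "(adj_in F N ^^ Suc (d x)) r y" using d1 adjN by auto
  from Least_le[of "\<lambda>n. (adj_in F N ^^ n) r y", OF this] show ?thesis unfolding d_def[of y] .
qed

lemma dr: "d r = 0"
proof -
  have "(adj_in F N ^^ 0) r r" by simp
  thus ?thesis unfolding d_def using Least_le[of "\<lambda>n. (adj_in F N ^^ n) r r" 0] by simp
qed

lemma d0: "x \<in> N \<Longrightarrow> d x = 0 \<Longrightarrow> x = r"
  using d1 by fastforce

lemma p1: "x \<in> N \<Longrightarrow> x \<noteq> r \<Longrightarrow> adj_in F N (p x) x \<and> Suc (d (p x)) = d x"
proof -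
  assume x: "x \<in> N" "x \<noteq> r"
  then have "d x \<noteq> 0" using d0 by blast
  then obtain m where m: "d x = Suc m" by (cases "d x") auto
  then have "(adj_in F N ^^ Suc m) r x" using d1 x by metis
  then obtain y where y: "(adj_in F N ^^ m) r y" "adj_in F N y x" by (rule relpowp_Suc_E)
  have "d y \<le> m" using y(1) unfolding d_def using Least_le[of "\<lambda>n. (adj_in F N ^^ n) r y" m] by simp
  moreover have "d x \<le> Suc (d y)" using d2 y(2) by blast
  ultimately have "adj_in F N y x \<and> Suc (d y) = d x" using m y by simp
  hence "adj_in F N (SOME y. adj_in F N y x \<and> Suc (d y) = d x) x \<and>
     Suc (d (SOME y. adj_in F N y x \<and> Suc (d y) = d x)) = d x" by (rule someI)
  thus ?thesis using x unfolding p_def by simp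
qed

lemma pN: "x \<in> N \<Longrightarrow> p x \<in> N"
  using p1 adjN by (cases "x = r") (auto simp: p_def)

lemma pd: "x \<in> N \<Longrightarrow> x \<noteq> r \<Longrightarrow> Suc (d (p x)) = d x" using p1 by blast

lemma pne: "x \<in> N \<Longrightarrow> x \<noteq> r \<Longrightarrow> p x \<noteq> x" using pd by fastforce

lemma pF: "x \<in> N \<Longrightarrow> x \<noteq> r \<Longrightarrow> {x, p x} \<in> F"
  using p1 unfolding adj_in_def by (simp add: insert_commute)

lemma edges: "e \<in> F \<Longrightarrow> \<exists>x\<in>N-{r}. e = {x, p x}"
proof -
  assume e: "e \<in> F"
  define g where "g x = {x, p x}" for x
  have inj: "inj_on g (N - {r})"
  proof (rule inj_onI)
    fix x y assume xy: "x \<in> N - {r}" "y \<in> N - {r}" "g x = g y"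
    show "x = y"
    proof (rule ccontr)
      assume "x \<noteq> y"
      with xy(3) have "x = p y \<and> p x = y" unfolding g_def doubleton_eq_iff by blast
      hence e1: "x = p y" and e2: "p x = y" by blast+
      have "Suc (d (p x)) = d x" "Suc (d (p y)) = d y" using pd xy(1,2) by auto
      hence "Suc (d y) = d x" "Suc (d x) = d y" by (simp_all only: e1[symmetric] e2)
      thus False by simp
    qed
  qed
  have sub: "g ` (N - {r}) \<subseteq> F" using pF unfolding g_def by blast
  have "card (g ` (N - {r})) = card N - 1" using card_image[OF inj] root finN by simp
  also have "\<dots> = card F" using tree unfolding is_tree_def by simp
  finally have "g ` (N - {r}) = F" using card_subset_eq[OF finF sub] by simp
  thus ?thesis using e unfolding g_def by blast
qed

lemma adjE: "adj_in F N x y \<Longrightarrow> (x \<noteq> r \<and> y = p x) \<or> (y \<noteq> r \<and> x = p y)"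
proof -
  assume "adj_in F N x y"
  then obtain z where "z \<in> N - {r}" "{x,y} = {z, p z}" using edges unfolding adj_in_def by blast
  thus ?thesis by (auto simp: doubleton_eq_iff)
qed


lemma pr: "p r = r" unfolding p_def by simp

lemma powN: "x \<in> N \<Longrightarrow> (p^^k) x \<in> N"
  by (induction k) (auto simp: pN)

lemma powr: "(p^^k) r = r"
  by (induction k) (auto simp: pr)

lemma powd: "x \<in> N \<Longrightarrow> k \<le> d x \<Longrightarrow> d ((p^^k) x) = d x - k"
proof (induction k)
  case 0 then show ?case by simp
next
  case (Suc k)
  then have h: "d ((p^^k) x) = d x - k" by simp
  have yN: "(p^^k) x \<in> N" using powN Suc by blast
  have "(p^^k) x \<noteq> r" using h Suc(3) dr by auto
  then have "Suc (d (p ((p^^k) x))) = d ((p^^k) x)" using pd yN by blast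
  then show ?case using h Suc(3) by simp
qed

lemma powdr: "x \<in> N \<Longrightarrow> (p^^(d x)) x = r"
  using powd[of x "d x"] d0 powN by simp

lemma anc_form: "x \<in> N \<Longrightarrow> anc t x \<Longrightarrow> d t \<le> d x \<and> t = (p^^(d x - d t)) x"
proof -
  assume x: "x \<in> N" and "anc t x"
  then obtain k where k: "(p^^k) x = t" unfolding anc_def by blast
  show ?thesis
  proof (cases "k \<le> d x")
    case True
    then have "d t = d x - k" using powd x k by blast
    then show ?thesis using True k by simp
  next
    case False
    then have "k = (k - d x) + d x" by simp
    then have "(p^^k) x = (p^^(k - d x)) ((p^^(d x)) x)"
      by (metis funpow_add comp_apply)
    also have "\<dots> = r" using powdr x powr by simp
    finally have "t = r" using k by simp
    then show ?thesis using dr powdr x by simp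
  qed
qed

lemma ancN: "x \<in> N \<Longrightarrow> anc t x \<Longrightarrow> t \<in> N"
  unfolding anc_def using powN by blast

lemma anc_refl: "anc x x" unfolding anc_def by (metis funpow_0)

lemma anc_root: "x \<in> N \<Longrightarrow> anc r x" unfolding anc_def using powdr by blast

lemma anc_trans: "anc t x \<Longrightarrow> anc x y \<Longrightarrow> anc t y"
  unfolding anc_def by (metis funpow_add o_apply)

lemma anc_p: "anc (p x) x" unfolding anc_def by (rule exI[of _ 1]) simp

lemma anc_antisym: "x \<in> N \<Longrightarrow> anc t x \<Longrightarrow> anc x t \<Longrightarrow> t = x"
proof -
  assume x: "x \<in> N" and a: "anc t x" "anc x t"
  have tN: "t \<in> N" using ancN x a by blast
  have "d t \<le> d x" "d x \<le> d t" using anc_form x tN a by blast+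
  then show ?thesis using anc_form[OF x a(1)] by simp
qed

lemma anc_uniq: "x \<in> N \<Longrightarrow> anc y x \<Longrightarrow> anc z x \<Longrightarrow> d y = d z \<Longrightarrow> y = z"
  using anc_form by metis

lemma anc_step: "x \<in> N \<Longrightarrow> anc t x \<Longrightarrow> t \<noteq> x \<Longrightarrow> anc t (p x)"
proof -
  assume "anc t x" "t \<noteq> x"
  then obtain k where k: "(p^^k) x = t" unfolding anc_def by blast
  with \<open>t \<noteq> x\<close> obtain j where j: "k = Suc j" by (cases k) auto
  have "(p^^j) (p x) = t" using k j by (simp add: funpow_Suc_right del: funpow.simps)
  then show ?thesis unfolding anc_def by blast
qed

lemma ch_props: "x \<in> N \<Longrightarrow> anc t x \<Longrightarrow> t \<noteq> x \<Longrightarrow>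
   ch t x \<in> N \<and> anc (ch t x) x \<and> ch t x \<noteq> r \<and> p (ch t x) = t \<and> d (ch t x) = Suc (d t)"
proof -
  assume x: "x \<in> N" and a: "anc t x" and ne: "t \<noteq> x"
  have f: "d t \<le> d x" "t = (p^^(d x - d t)) x" using anc_form x a by blast+
  have lt: "d t < d x" using f ne by (metis diff_self_eq_0 funpow_0 le_neq_implies_less)
  define c where "c = ch t x"
  have c: "c = (p^^(d x - d t - 1)) x" unfolding c_def ch_def by simp
  have cN: "c \<in> N" using c powN x by blast
  have ca: "anc c x" using c unfolding anc_def by blast
  have dc: "d c = Suc (d t)" using c powd[of x "d x - d t - 1"] x lt by simp
  have cr: "c \<noteq> r" using dc dr by auto
  have "p c = (p^^(Suc (d x - d t - 1))) x" using c by simp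
  also have "Suc (d x - d t - 1) = d x - d t" using lt by simp
  finally have "p c = t" using f by simp
  then show ?thesis using cN ca cr dc by (simp add: c_def)
qed

lemma ch_uniq: "x \<in> N \<Longrightarrow> c \<in> N \<Longrightarrow> c \<noteq> r \<Longrightarrow> anc c x \<Longrightarrow> p c = t \<Longrightarrow> ch t x = c"
proof -
  assume x: "x \<in> N" and cN: "c \<in> N" and cr: "c \<noteq> r" and a: "anc c x" and pc: "p c = t"
  have dc: "Suc (d t) = d c" using pd cN cr pc by blast
  have "c = (p^^(d x - d c)) x" using anc_form x a by blast
  then show ?thesis unfolding ch_def using dc by simp
qed

lemma anc_child: "x \<in> N \<Longrightarrow> x \<noteq> r \<Longrightarrow> ch (p x) x = x"
  using ch_uniq anc_refl by blast


lemma cp_step: "y \<in> N \<Longrightarrow> y \<noteq> r \<Longrightarrow> y \<noteq> t \<Longrightarrow> p y \<noteq> t \<Longrightarrow> cp t y = cp t (p y)"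
proof -
  assume y: "y \<in> N" "y \<noteq> r" "y \<noteq> t" "p y \<noteq> t"
  show ?thesis
  proof (cases "anc t y")
    case True
    have a2: "anc t (p y)" using anc_step y True by blast
    have c: "ch t y \<in> N \<and> anc (ch t y) y \<and> ch t y \<noteq> r \<and> p (ch t y) = t"
      using ch_props y True by blast
    have "ch t y \<noteq> y" using c y(4) by metis
    then have "anc (ch t y) (p y)" using anc_step c y by blast
    then have "ch t (p y) = ch t y" using ch_uniq c pN y(1) by blast
    then show ?thesis unfolding cp_def using True a2 y by simp
  next
    case False
    have "\<not> anc t (p y)" using False anc_trans anc_p by blast
    then show ?thesis unfolding cp_def using False by simp
  qed
qed

lemma S1: "x \<in> N - {t} \<Longrightarrow> same_comp N F t x y \<Longrightarrow> cp t x = cp t y"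
  unfolding same_comp_def
proof -
  assume x: "x \<in> N - {t}" and h: "(adj_in F (N - {t}))\<^sup>*\<^sup>* x y"
  from h show "cp t x = cp t y"
  proof (induction rule: rtranclp_induct)
    case base then show ?case by simp
  next
    case (step y z)
    have yz: "y \<in> N" "z \<in> N" "y \<noteq> t" "z \<noteq> t" "{y,z} \<in> F" using step(2) unfolding adj_in_def by auto
    then have "adj_in F N y z" unfolding adj_in_def by simp
    then have "(y \<noteq> r \<and> z = p y) \<or> (z \<noteq> r \<and> y = p z)" by (rule adjE)
    then have "cp t y = cp t z"
    proof
      assume h: "y \<noteq> r \<and> z = p y"
      show ?thesis using cp_step[of y t] h yz by simp
    next
      assume h: "z \<noteq> r \<and> y = p z"
      show ?thesis using cp_step[of z t] h yz by simp
    qed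
    then show ?case using step by simp
  qed
qed

end


lemma graph_edge: "graph V E \<Longrightarrow> {u,v} \<in> E \<Longrightarrow> u \<in> V \<and> v \<in> V \<and> u \<noteq> v"
proof -
  assume g: "graph V E" and e: "{u,v} \<in> E"
  have "\<exists>x y. {u,v} = {x,y} \<and> x \<noteq> y \<and> x \<in> V \<and> y \<in> V"
    using g e unfolding graph_def by blast
  then obtain x y where xy: "{u,v} = {x,y}" "x \<noteq> y" "x \<in> V" "y \<in> V" by blast
  have "u \<in> {x,y}" "v \<in> {x,y}" using xy(1) by (metis insertI1, metis insertI1 insertI2)
  moreover have "u \<noteq> v"
  proof
    assume "u = v"
    then have "{x,y} = {u}" using xy(1) by simp
    then show False using xy(2) by (metis insertI1 insertI2 singletonD)
  qed
  ultimately show ?thesis using xy by blast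
qed

lemma card_pair_le: "card {u,v} \<le> 2"
  by (cases "u = v") auto

lemma (in rtree) main:
  fixes V :: "'a set" and E :: "'a set set" and X :: "nat \<Rightarrow> 'a set"
  assumes g: "graph V E" and tcd: "tree_cut_decomp V E N F X"
   and cr: "\<And>t. t \<in> N \<Longrightarrow> cross E N F X t \<le> k" and th: "\<And>t. t \<in> N \<Longrightarrow> card (X t) \<le> a"
  shows "treewidth V E \<le> int (2*a + 3*k) - 1"
proof -
  have disj: "\<And>s t. s \<in> N \<Longrightarrow> t \<in> N \<Longrightarrow> s \<noteq> t \<Longrightarrow> X s \<inter> X t = {}"
    using tcd unfolding tree_cut_decomp_def by blast
  have cov: "(\<Union>t\<in>N. X t) = V" using tcd unfolding tree_cut_decomp_def by blast
  have finV: "finite V" using g unfolding graph_def by blast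
  have finE: "finite E" using g graph_finE by blast
  have XV: "\<And>t. t \<in> N \<Longrightarrow> X t \<subseteq> V" using cov by blast
  define nd where "nd u = (THE s. s \<in> N \<and> u \<in> X s)" for u
  have nd_eq: "\<And>u s. s \<in> N \<Longrightarrow> u \<in> X s \<Longrightarrow> nd u = s"
  proof -
    fix u s assume s: "s \<in> N" "u \<in> X s"
    show "nd u = s" unfolding nd_def
    proof (rule the_equality)
      show "s \<in> N \<and> u \<in> X s" using s by blast
    next
      fix s' assume "s' \<in> N \<and> u \<in> X s'"
      then show "s' = s" using disj s by blast
    qed
  qed
  have nd1: "\<And>u. u \<in> V \<Longrightarrow> nd u \<in> N \<and> u \<in> X (nd u)"
  proof -
    fix u assume "u \<in> V"
    then obtain s where "s \<in> N" "u \<in> X s" using cov by blast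
    then show "nd u \<in> N \<and> u \<in> X (nd u)" using nd_eq by simp
  qed
  define B where "B t = {u \<in> V. nd u = t \<or> (\<exists>v. {u,v} \<in> E \<and> nd u \<noteq> t \<and>
      ((nd v \<noteq> t \<and> cp t (nd u) \<noteq> cp t (nd v)) \<or> (nd v = t \<and> \<not> anc t (nd u))))}" for t
  have BV: "\<And>t. B t \<subseteq> V" unfolding B_def by blast
  have own: "\<And>u. u \<in> V \<Longrightarrow> u \<in> B (nd u)" unfolding B_def by blast
  have cpp: "\<And>t x. t \<in> N \<Longrightarrow> t \<noteq> r \<Longrightarrow> x \<in> N \<Longrightarrow> \<not> anc t x \<Longrightarrow> cp (p t) x \<noteq> Some t"
  proof
    fix t x assume t: "t \<in> N" "t \<noteq> r" and x: "x \<in> N" "\<not> anc t x" and c: "cp (p t) x = Some t"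
    then have h: "anc (p t) x" "x \<noteq> p t" "ch (p t) x = t" unfolding cp_def by (auto split: if_splits)
    then show False using ch_props[OF x(1) h(1) h(2)[symmetric]] x(2) by simp
  qed
  have cpc: "\<And>t b. t \<in> N \<Longrightarrow> t \<noteq> r \<Longrightarrow> b \<in> N \<Longrightarrow> anc t b \<Longrightarrow> cp (p t) b = Some t"
  proof -
    fix t b assume t: "t \<in> N" "t \<noteq> r" and b: "b \<in> N" "anc t b"
    have ab: "anc (p t) b" using anc_trans anc_p b by blast
    have "b \<noteq> p t"
    proof
      assume "b = p t"
      then have "t = p t" using anc_antisym[of t "p t"] b anc_p t pN by metis
      then show False using pne t by metis
    qed
    moreover have "ch (p t) b = t" using ch_uniq b t by blast
    ultimately show "cp (p t) b = Some t" unfolding cp_def using ab by simp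
  qed
  have td: "tree_decomp V E N F B"
    unfolding tree_decomp_def
  proof (intro conjI ballI)
    show "is_tree N F" by (rule tree)
  next
    fix t assume "t \<in> N" show "B t \<subseteq> V" by (rule BV)
  next
    fix v assume "v \<in> V" then show "\<exists>t\<in>N. v \<in> B t" using own nd1 by blast
  next
    fix e assume e: "e \<in> E"
    have "\<exists>u v. e = {u,v} \<and> u \<noteq> v \<and> u \<in> V \<and> v \<in> V" using g e unfolding graph_def by blast
    then obtain u v where uv: "e = {u,v}" and uvV: "u \<in> V" "v \<in> V" by blast
    have nu: "nd u \<in> N" and nv: "nd v \<in> N" using nd1 uvV by blast+
    have ou: "u \<in> B (nd u)" and ov: "v \<in> B (nd v)" using own uvV by blast+
    show "\<exists>t\<in>N. e \<subseteq> B t"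
    proof (cases "nd u = nd v")
      case True
      have "e \<subseteq> B (nd u)" using ou ov True uv by simp
      then show ?thesis using nu by (rule_tac bexI)
    next
      case ne: False
      show ?thesis
      proof (cases "anc (nd v) (nd u)")
        case False
        have "\<exists>w. {u,w} \<in> E \<and> nd u \<noteq> nd v \<and> ((nd w \<noteq> nd v \<and> cp (nd v) (nd u) \<noteq> cp (nd v) (nd w))
             \<or> (nd w = nd v \<and> \<not> anc (nd v) (nd u)))" using e uv ne False by (intro exI[of _ v]) auto
        then have "u \<in> B (nd v)" unfolding B_def using uvV by blast
        then have "e \<subseteq> B (nd v)" using ov uv by simp
        then show ?thesis using nv by (rule_tac bexI)
      next
        case True
        have na: "\<not> anc (nd u) (nd v)" using anc_antisym[OF nu True] ne by metis
        have e2: "{v,u} \<in> E" using e uv by (simp add: insert_commute)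
        have "\<exists>w. {v,w} \<in> E \<and> nd v \<noteq> nd u \<and> ((nd w \<noteq> nd u \<and> cp (nd u) (nd v) \<noteq> cp (nd u) (nd w))
             \<or> (nd w = nd u \<and> \<not> anc (nd u) (nd v)))" using e2 ne na by (intro exI[of _ u]) auto
        then have "v \<in> B (nd u)" unfolding B_def using uvV by blast
        then have "e \<subseteq> B (nd u)" using ou uv by simp
        then show ?thesis using nu by (rule_tac bexI)
      qed
    qed
  next
    fix u assume uV: "u \<in> V"
    define a where "a = nd u"
    have aN: "a \<in> N" using nd1 uV a_def by blast
    define \<mu> where "\<mu> t = (if anc t a then d a - d t else d t + d a + 1)" for t
    show "connected_in F {t \<in> N. u \<in> B t}"
    proof (rule conn_step[where a = a and \<mu> = \<mu>])
      show "a \<in> {t \<in> N. u \<in> B t}" using own uV aN a_def by blast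
    next
      fix t assume tS: "t \<in> {t \<in> N. u \<in> B t}" and ta: "t \<noteq> a"
      have tN: "t \<in> N" using tS by blast
      obtain v where v: "{u,v} \<in> E" "(nd v \<noteq> t \<and> cp t a \<noteq> cp t (nd v)) \<or> (nd v = t \<and> \<not> anc t a)"
        using tS ta unfolding B_def a_def by blast
      define b where "b = nd v"
      have bN: "b \<in> N" using nd1 graph_edge[OF g v(1)] b_def by blast
      have vcl: "(b \<noteq> t \<and> cp t a \<noteq> cp t b) \<or> (b = t \<and> \<not> anc t a)" using v b_def by blast
      show "\<exists>t'\<in>{t \<in> N. u \<in> B t}. {t, t'} \<in> F \<and> \<mu> t' < \<mu> t"
      proof (cases "anc t a")
        case False
        have tr: "t \<noteq> r" using False anc_root aN by blast
        have ptN: "p t \<in> N" using pN tN by blast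
        have pF': "{t, p t} \<in> F" using pF tN tr by blast
        have mu: "\<mu> (p t) < \<mu> t"
        proof -
          have "Suc (d (p t)) = d t" using pd tN tr by blast
          then show ?thesis unfolding \<mu>_def using False by auto
        qed
        have "u \<in> B (p t)"
        proof (cases "p t = a")
          case True then show ?thesis using own[OF uV] a_def by simp
        next
          case pa: False
          have n1: "cp (p t) a \<noteq> Some t" using cpp tN tr aN False by blast
          have cb: "b \<noteq> p t \<and> cp (p t) b = Some t"
          proof (cases "b = t")
            case True
            then show ?thesis using pne tN tr cpc anc_refl by metis
          next
            case bt: False
            then have "cp t a \<noteq> cp t b" using vcl by blast
            moreover have "cp t a = None" unfolding cp_def using False by simp
            ultimately have ab: "anc t b" unfolding cp_def by (auto split: if_splits)
            have "b \<noteq> p t"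
            proof
              assume "b = p t"
              then have "t = p t" using anc_antisym[of t "p t"] ab anc_p tN pN by metis
              then show False using pne tN tr by metis
            qed
            then show ?thesis using cpc tN tr bN ab by blast
          qed
          have "cp (p t) a \<noteq> cp (p t) b" using n1 cb by simp
          then show ?thesis unfolding B_def using uV v(1) pa cb b_def a_def by blast
        qed
        then show ?thesis using ptN pF' mu by blast
      next
        case True
        define c where "c = ch t a"
        have c: "c \<in> N" "anc c a" "c \<noteq> r" "p c = t" "d c = Suc (d t)"
          using ch_props[OF aN True ta] unfolding c_def by auto
        have cF: "{t, c} \<in> F" using pF[OF c(1) c(3)] c(4) by (simp add: insert_commute)
        have mu: "\<mu> c < \<mu> t"
        proof -
          have "d c \<le> d a" using anc_form aN c(2) by blast
          then show ?thesis unfolding \<mu>_def using True c(2) c(5) by auto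
        qed
        have "u \<in> B c"
        proof (cases "c = a")
          case True then show ?thesis using own[OF uV] a_def by simp
        next
          case ca: False
          have bt: "b \<noteq> t" and neq: "cp t a \<noteq> cp t b" using vcl True by blast+
          have cpa: "cp t a = Some c" unfolding cp_def c_def using True ta by simp
          have bc: "b \<noteq> c"
          proof
            assume "b = c"
            then have "cp t b = Some (ch t c)" unfolding cp_def using c anc_p[of c] by auto
            also have "ch t c = c" using ch_uniq[OF c(1) c(1) c(3) anc_refl c(4)] .
            finally show False using neq cpa by simp
          qed
          have cpb: "cp c b = None"
          proof (rule ccontr)
            assume "cp c b \<noteq> None"
            then have cb: "anc c b" "b \<noteq> c" unfolding cp_def by (auto split: if_splits)
            have tb: "anc t b" using anc_trans anc_p cb(1) c(4) by metis
            have "b \<noteq> t"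
            proof
              assume "b = t"
              then have "c = t" using anc_antisym[of c t] cb(1) anc_p[of c] c by metis
              then show False using c pne by metis
            qed
            then have "cp t b = Some (ch t b)" unfolding cp_def using tb by simp
            also have "ch t b = c" using ch_uniq[OF bN c(1) c(3) cb(1) c(4)] .
            finally show False using neq cpa by simp
          qed
          have "cp c a \<noteq> None" unfolding cp_def using c(2) ca by simp
          then have "cp c a \<noteq> cp c b" using cpb by simp
          then show ?thesis unfolding B_def using uV v(1) ca bc b_def a_def by blast
        qed
        then show ?thesis using c(1) cF mu by blast
      qed
    qed
  qed
  define C where "C t = {e\<in>E. \<exists>u v s s'. e = {u, v} \<and> s \<in> N - {t} \<and> s' \<in> N - {t}
      \<and> u \<in> X s \<and> v \<in> X s' \<and> \<not> same_comp N F t s s'}" for t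
  have crC: "\<And>t. cross E N F X t = card (C t)" unfolding cross_def C_def by simp
  have finC: "\<And>t. finite (C t)" using finE unfolding C_def by simp
  have cardC: "\<And>t. t \<in> N \<Longrightarrow> card (C t) \<le> k" using cr crC by metis
  define W where "W t = {u \<in> V. \<exists>v\<in>X t. {u,v} \<in> C (p t) \<and> u \<notin> X t}" for t
  have sub: "\<And>t. t \<in> N \<Longrightarrow> B t \<subseteq> X t \<union> \<Union>(C t) \<union> X (p t) \<union> W t"
  proof
    fix t u assume t: "t \<in> N" and uB: "u \<in> B t"
    have uV: "u \<in> V" using uB BV by blast
    have aN: "nd u \<in> N" and ua: "u \<in> X (nd u)" using nd1 uV by blast+
    show "u \<in> X t \<union> \<Union>(C t) \<union> X (p t) \<union> W t"
    proof (cases "nd u = t")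
      case True then show ?thesis using ua by simp
    next
      case False
      obtain v where v: "{u,v} \<in> E" "(nd v \<noteq> t \<and> cp t (nd u) \<noteq> cp t (nd v)) \<or> (nd v = t \<and> \<not> anc t (nd u))"
        using uB False unfolding B_def by blast
      have vV: "v \<in> V" using graph_edge[OF g v(1)] by blast
      have bN: "nd v \<in> N" and vb: "v \<in> X (nd v)" using nd1 vV by blast+
      from v(2) show ?thesis
      proof
        assume h: "nd v \<noteq> t \<and> cp t (nd u) \<noteq> cp t (nd v)"
        have nsc: "\<not> same_comp N F t (nd u) (nd v)"
          using S1[of "nd u" t "nd v"] aN False h by blast
        have "{u,v} \<in> C t" unfolding C_def using v(1) aN bN ua vb False h nsc by blast
        then show ?thesis by blast
      next
        assume h: "nd v = t \<and> \<not> anc t (nd u)"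
        have tr: "t \<noteq> r" using h anc_root aN by blast
        show ?thesis
        proof (cases "nd u = p t")
          case True then show ?thesis using ua by simp
        next
          case pa: False
          have c1: "cp (p t) t = Some t" using cpc[OF t tr t anc_refl] .
          have c2: "cp (p t) (nd u) \<noteq> Some t" using cpp[OF t tr aN] h by blast
          have nsc: "\<not> same_comp N F (p t) (nd u) t"
            using S1[of "nd u" "p t" t] aN pa c1 c2 by auto
          have ptt: "t \<noteq> p t" using pne t tr by metis
          have vt: "v \<in> X t" using vb h by simp
          have "{u,v} \<in> C (p t)" unfolding C_def using v(1) aN t ptt ua vt pa nsc by blast
          moreover have "u \<notin> X t" using nd_eq[OF t] False by blast
          ultimately have "u \<in> W t" unfolding W_def using uV vt by blast
          then show ?thesis by blast
        qed
      qed
    qed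
  qed
  have cardW: "\<And>t. t \<in> N \<Longrightarrow> card (W t) \<le> card (C (p t))"
  proof -
    fix t assume t: "t \<in> N"
    define f where "f u = {u, SOME v. v \<in> X t \<and> {u,v} \<in> C (p t)}" for u
    have fv: "\<And>u. u \<in> W t \<Longrightarrow> (SOME v. v \<in> X t \<and> {u,v} \<in> C (p t)) \<in> X t \<and>
        {u, SOME v. v \<in> X t \<and> {u,v} \<in> C (p t)} \<in> C (p t)"
    proof -
      fix u assume "u \<in> W t"
      then have "\<exists>v. v \<in> X t \<and> {u,v} \<in> C (p t)" unfolding W_def by blast
      then show "(SOME v. v \<in> X t \<and> {u,v} \<in> C (p t)) \<in> X t \<and>
        {u, SOME v. v \<in> X t \<and> {u,v} \<in> C (p t)} \<in> C (p t)" by (rule someI_ex)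
    qed
    have "inj_on f (W t)"
    proof (rule inj_onI)
      fix u1 u2 assume u: "u1 \<in> W t" "u2 \<in> W t" "f u1 = f u2"
      have n1: "u1 \<notin> X t" "u2 \<notin> X t" using u unfolding W_def by blast+
      have x1: "(SOME v. v \<in> X t \<and> {u1,v} \<in> C (p t)) \<in> X t" using fv u(1) by blast
      have x2: "(SOME v. v \<in> X t \<and> {u2,v} \<in> C (p t)) \<in> X t" using fv u(2) by blast
      have "u1 \<in> f u1" unfolding f_def by simp
      then have "u1 \<in> f u2" using u(3) by simp
      then have "u1 = u2 \<or> u1 = (SOME v. v \<in> X t \<and> {u2,v} \<in> C (p t))" unfolding f_def by simp
      then show "u1 = u2" using x2 n1 by metis
    qed
    moreover have "f ` W t \<subseteq> C (p t)" unfolding f_def using fv by blast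
    ultimately show "card (W t) \<le> card (C (p t))" using card_inj_on_le finC by blast
  qed
  have cardU: "\<And>t. card (\<Union>(C t)) \<le> 2 * card (C t)"
  proof -
    fix t
    have "card (\<Union>(C t)) \<le> sum card (C t)" by (rule card_Union_le_sum_card)
    also have "\<dots> \<le> of_nat (card (C t)) * 2"
    proof (rule sum_bounded_above)
      fix e assume "e \<in> C t"
      then have "e \<in> E" unfolding C_def by blast
      then obtain x y where "e = {x,y}" using g unfolding graph_def by blast
      then show "card e \<le> 2" using card_pair_le by simp
    qed
    finally show "card (\<Union>(C t)) \<le> 2 * card (C t)" by simp
  qed
  have bound: "\<And>t. t \<in> N \<Longrightarrow> card (B t) \<le> 2*a + 3*k"
  proof -
    fix t assume t: "t \<in> N"
    have ptN: "p t \<in> N" using pN t by blast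
    have f1: "finite (X t)" "finite (X (p t))" using XV t ptN finV finite_subset by blast+
    have f2: "finite (W t)" using finV unfolding W_def by simp
    have f3: "finite (\<Union>(C t))"
    proof (rule finite_Union)
      show "finite (C t)" by (rule finC)
    next
      fix e assume "e \<in> C t"
      then have "e \<in> E" unfolding C_def by blast
      then obtain x y where "e = {x,y}" using g unfolding graph_def by blast
      then show "finite e" by simp
    qed
    have "card (B t) \<le> card (X t \<union> \<Union>(C t) \<union> X (p t) \<union> W t)"
      using sub[OF t] f1 f2 f3 by (intro card_mono) auto
    also have "\<dots> \<le> card (X t) + card (\<Union>(C t)) + card (X (p t)) + card (W t)"
      by (meson add_mono card_Un_le le_refl order_trans)
    also have "\<dots> \<le> a + 2 * k + a + k"
      using th[OF t] th[OF ptN] cardU[of t] cardC[OF t] cardC[OF ptN] cardW[OF t] by linarith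
    finally show "card (B t) \<le> 2*a + 3*k" by simp
  qed
  have "Max ((\<lambda>t. card (B t)) ` N) \<le> 2*a + 3*k"
    using bound finN root by (subst Max_le_iff) auto
  then have w: "td_width N B \<le> int (2*a + 3*k) - 1" unfolding td_width_def by simp
  have "treewidth V E \<le> td_width N B"
    unfolding treewidth_def
  proof (rule cInf_lower)
    show "td_width N B \<in> {td_width N B |N F B. tree_decomp V E N F B}" using td by blast
  next
    show "bdd_below {td_width N B |N F (B :: nat \<Rightarrow> 'a set). tree_decomp V E N F B}"
      by (rule bdd_belowI[of _ "-1"]) (auto simp: td_width_def)
  qed
  then show ?thesis using w by simp
qed


lemma tw_bound:
  fixes V :: "'a set" and E :: "'a set set"
  assumes g: "graph V E" and tcd: "tree_cut_decomp V E N F X"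
  shows "treewidth V E \<le> int (2 * thickness N X + 3 * crossing_number E N F X) - 1"
proof -
  have tr: "is_tree N F" using tcd unfolding tree_cut_decomp_def by blast
  then obtain r where r: "r \<in> N" unfolding is_tree_def by blast
  interpret rtree N F r using tr r by unfold_locales
  show ?thesis
  proof (rule main[OF g tcd])
    fix t assume "t \<in> N"
    then show "cross E N F X t \<le> crossing_number E N F X"
      unfolding crossing_number_def using finN by simp
  next
    fix t assume "t \<in> N"
    then show "card (X t) \<le> thickness N X"
      unfolding thickness_def using finN by simp
  qed
qed

lemma ex_tcd:
  fixes V :: "'a set" and E :: "'a set set"
  assumes g: "graph V E"
  shows "\<exists>N F X. tree_cut_decomp V E N F X \<and> thickness N X \<le> 1"
proof -
  have finV: "finite V" using g unfolding graph_def by blast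
  define n where "n = card V"
  obtain h where h: "bij_betw h {0..<n} V" using ex_bij_betw_nat_finite[OF finV] n_def by blast
  define m where "m = Suc (n - 1)"
  define N where "N = {0..<m}"
  define F where "F = (\<lambda>i. {i, Suc i}) ` {0..<m-1}"
  define X where "X i = (if i < n then {h i} else {})" for i
  have nm: "n \<le> m" unfolding m_def by simp
  have gr: "graph N F" unfolding graph_def
  proof (intro conjI ballI)
    show "finite N" unfolding N_def by simp
  next
    fix e assume "e \<in> F"
    then obtain i where i: "e = {i, Suc i}" "i < m - 1" unfolding F_def by auto
    show "\<exists>u v. e = {u, v} \<and> u \<noteq> v \<and> u \<in> N \<and> v \<in> N"
      by (rule exI[of _ i], rule exI[of _ "Suc i"]) (use i in \<open>auto simp: N_def\<close>)
  qed
  have conn: "\<And>i. i < m \<Longrightarrow> (adj_in F N)\<^sup>*\<^sup>* 0 i \<and> (adj_in F N)\<^sup>*\<^sup>* i 0"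
  proof -
    fix i show "i < m \<Longrightarrow> (adj_in F N)\<^sup>*\<^sup>* 0 i \<and> (adj_in F N)\<^sup>*\<^sup>* i 0"
    proof (induction i)
      case 0 then show ?case by simp
    next
      case (Suc i)
      have fi: "{i, Suc i} \<in> F" unfolding F_def using Suc(2) by auto
      have a1: "adj_in F N i (Suc i)" unfolding adj_in_def N_def using fi Suc(2) by simp
      have a2: "adj_in F N (Suc i) i" unfolding adj_in_def N_def using fi Suc(2) by (simp add: insert_commute)
      have "(adj_in F N)\<^sup>*\<^sup>* 0 i \<and> (adj_in F N)\<^sup>*\<^sup>* i 0" using Suc by simp
      then show ?case using a1 a2
        by (meson converse_rtranclp_into_rtranclp rtranclp.rtrancl_into_rtrancl)
    qed
  qed
  have co: "connected_in F N" unfolding connected_in_def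
  proof (intro ballI)
    fix x y assume "x \<in> N" "y \<in> N"
    then have "x < m" "y < m" unfolding N_def by auto
    then show "(adj_in F N)\<^sup>*\<^sup>* x y" using conn by (meson rtranclp_trans)
  qed
  have inj: "inj_on (\<lambda>i. {i, Suc i}) {0..<m-1}"
    by (rule inj_onI) (auto simp: doubleton_eq_iff)
  have cF: "card F = card N - 1" unfolding F_def N_def using card_image[OF inj] by simp
  have tree: "is_tree N F" unfolding is_tree_def using gr co cF by (simp add: N_def m_def)
  have disj: "\<forall>s\<in>N. \<forall>t\<in>N. s \<noteq> t \<longrightarrow> X s \<inter> X t = {}"
  proof (intro ballI impI)
    fix s t assume "s \<in> N" "t \<in> N" "s \<noteq> t"
    then show "X s \<inter> X t = {}" unfolding X_def
      using h unfolding bij_betw_def inj_on_def by auto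
  qed
  have un: "(\<Union>t\<in>N. X t) = V"
  proof -
    have "(\<Union>t\<in>N. X t) = h ` {0..<n}"
    proof
      show "(\<Union>t\<in>N. X t) \<subseteq> h ` {0..<n}" unfolding X_def by (auto split: if_splits)
    next
      show "h ` {0..<n} \<subseteq> (\<Union>t\<in>N. X t)"
      proof
        fix y assume "y \<in> h ` {0..<n}"
        then obtain i where i: "i < n" "y = h i" by auto
        then have "y \<in> X i" "i \<in> N" unfolding X_def N_def using nm by auto
        then show "y \<in> (\<Union>t\<in>N. X t)" by blast
      qed
    qed
    then show ?thesis using h unfolding bij_betw_def by simp
  qed
  have th: "thickness N X \<le> 1"
    unfolding thickness_def N_def
    by (subst Max_le_iff) (auto simp: X_def m_def)
  show ?thesis using tree disj un th unfolding tree_cut_decomp_def by blast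
qed

theorem lemma3p1:
  fixes V :: "'a set" and E :: "'a set set" and \<alpha> :: nat
  assumes "graph V E" and "\<alpha> > 0"
  shows "treewidth V E \<le> 5 * int (ecrw V E) - 1
       \<and> treewidth V E \<le> 3 * int (ecrw_alpha \<alpha> V E) + 2 * int \<alpha> - 1"
proof
  obtain N0 F0 X0 where d0: "tree_cut_decomp V E N0 F0 X0" "thickness N0 X0 \<le> 1"
    using ex_tcd[OF assms(1)] by blast
  have "ecrw V E \<in> {max (crossing_number E N F X) (thickness N X) | N F X.
       tree_cut_decomp V E N F X}" unfolding ecrw_def
    by (rule Inf_nat_def1) (use d0 in blast)
  then obtain N F X where d: "tree_cut_decomp V E N F X"
    "ecrw V E = max (crossing_number E N F X) (thickness N X)" by blast
  have "treewidth V E \<le> int (2 * thickness N X + 3 * crossing_number E N F X) - 1"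
    by (rule tw_bound[OF assms(1) d(1)])
  then show "treewidth V E \<le> 5 * int (ecrw V E) - 1" using d(2) by linarith
next
  obtain N0 F0 X0 where d0: "tree_cut_decomp V E N0 F0 X0" "thickness N0 X0 \<le> 1"
    using ex_tcd[OF assms(1)] by blast
  have "ecrw_alpha \<alpha> V E \<in> {crossing_number E N F X | N F X.
       tree_cut_decomp V E N F X \<and> thickness N X \<le> \<alpha>}" unfolding ecrw_alpha_def
    by (rule Inf_nat_def1) (use d0 assms(2) in fastforce)
  then obtain N F X where d: "tree_cut_decomp V E N F X" "thickness N X \<le> \<alpha>"
    "ecrw_alpha \<alpha> V E = crossing_number E N F X" by blast
  have "treewidth V E \<le> int (2 * thickness N X + 3 * crossing_number E N F X) - 1"
    by (rule tw_bound[OF assms(1) d(1)])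
  then show "treewidth V E \<le> 3 * int (ecrw_alpha \<alpha> V E) + 2 * int \<alpha> - 1" using d(2,3) by linarith
qed

end
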